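(* Let $a,b,c,d\in\mathbb{Z}$, $h_{1}(x)=ax+b$ and $h_{2}(x)=cx+d$, and suppose (1) $0<a\leq c$, (2) $0\leq b,d$, and (3) $1+\frac{d}{c}>\frac{b}{a}$. Then \[ \left(\frac{1}{h_{2}(1)}\mathbb{K}_{1}^{\infty}\frac{-h_{1}(i)h_{2}(i)}{h_{1}(i)+h_{2}(i+1)}+1\right)^{-1}=\frac{1}{B\left(1+\frac{b}{a},1+\frac{d}{c}-\frac{b}{a}\right)}\int_{0}^{1}\frac{t^{\frac{b}{a}}(1-t)^{\frac{d}{c}-\frac{b}{a}}}{1-\frac{a}{c}t}\,dt. \] In particular, if $a=c>0$ and $d>b$, this expression equals \[ \frac{B\left(1+\frac{b}{a},\frac{d-b}{a}\right)}{B\left(1+\frac{b}{a},1+\frac{d-b}{a}\right)}=\frac{d+a}{d-b}. \]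
   Context: $B(z_{1},z_{2})=\int_{0}^{1}t^{z_{1}-1}(1-t)^{z_{2}-1}\,dt$ is the Beta function. For sequences $\beta_i,\alpha_i$, $\mathbb{K}_{1}^{n}\frac{\beta_{i}}{\alpha_{i}}:=\cfrac{\beta_{1}}{\alpha_{1}+\cfrac{\beta_{2}}{\ddots+\cfrac{\beta_{n}}{\alpha_{n}+0}}}$ and $\mathbb{K}_{1}^{\infty}\frac{\beta_{i}}{\alpha_{i}}:=\lim_{n\to\infty}\mathbb{K}_{1}^{n}\frac{\beta_{i}}{\alpha_{i}}$; here $\beta_i=-h_1(i)h_2(i)$, $\alpha_i=h_1(i)+h_2(i+1)$. *)

theory Defs
  imports "HOL-Analysis.Analysis"
begin

fun cfrac_from :: "(nat \<Rightarrow> real) \<Rightarrow> (nat \<Rightarrow> real) \<Rightarrow> nat \<Rightarrow> nat \<Rightarrow> real" where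
  "cfrac_from beta alpha i 0 = 0"
| "cfrac_from beta alpha i (Suc k) = beta i / (alpha i + cfrac_from beta alpha (Suc i) k)"

definition cfrac_K :: "(nat \<Rightarrow> real) \<Rightarrow> (nat \<Rightarrow> real) \<Rightarrow> nat \<Rightarrow> real" where
  "cfrac_K beta alpha n = cfrac_from beta alpha 1 n"

end

theory Submission
  imports Defs
begin

lemma cf_tail:
  fixes p q :: "nat \<Rightarrow> real"
  assumes pp: "\<And>i. i \<ge> 1 \<Longrightarrow> p i > 0" and qp: "\<And>i. i \<ge> 1 \<Longrightarrow> q i > 0"
  shows "i \<ge> 1 \<Longrightarrow> cfrac_from (\<lambda>i. -(p i * q i)) (\<lambda>i. p i + q (Suc i)) i k
       = - q i * (1 - 1 / (\<Sum>m\<le>k. \<Prod>j<m. p (i+j) / q (i+j+1)))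
     \<and> (\<Sum>m\<le>k. \<Prod>j<m. p (i+j) / q (i+j+1)) \<ge> 1"
proof (induction k arbitrary: i)
  case 0
  then show ?case by simp
next
  case (Suc k)
  define S' where "S' = (\<Sum>m\<le>k. \<Prod>j<m. p (Suc i+j) / q (Suc i+j+1))"
  have IH: "cfrac_from (\<lambda>i. -(p i * q i)) (\<lambda>i. p i + q (Suc i)) (Suc i) k = - q (Suc i) * (1 - 1 / S')"
    "S' \<ge> 1" using Suc.IH[of "Suc i"] by (auto simp: S'_def)
  have eq: "(\<Sum>m\<le>Suc k. \<Prod>j<m. p (i+j) / q (i+j+1)) = 1 + p i / q (Suc i) * S'"
    unfolding S'_def sum.atMost_Suc_shift prod.lessThan_Suc_shift sum_distrib_left
    by simp
  have pi: "p i > 0" "q i > 0" "q (Suc i) > 0" using Suc.prems pp qp by auto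
  have S'0: "S' > 0" using IH(2) by simp
  have "cfrac_from (\<lambda>i. -(p i * q i)) (\<lambda>i. p i + q (Suc i)) i (Suc k)
      = -(p i * q i) / (p i + q (Suc i) + - q (Suc i) * (1 - 1 / S'))"
    using IH(1) by simp
  also have "\<dots> = - q i * (1 - 1 / (1 + p i / q (Suc i) * S'))"
  proof -
    have d: "q (Suc i) + S' * p i > 0" using pi S'0 by (simp add: add_pos_pos)
    have "p i + q (Suc i) + - q (Suc i) * (1 - 1 / S') = (q (Suc i) + S' * p i) / S'"
      using S'0 by (simp add: field_simps)
    moreover have "1 + p i / q (Suc i) * S' = (q (Suc i) + S' * p i) / q (Suc i)"
      using pi by (simp add: field_simps)
    ultimately show ?thesis using d pi S'0 by (simp add: field_simps)
  qed
  finally show ?case unfolding eq using pi S'0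
    by (simp add: zero_le_mult_iff)
qed


theorem claim34:
  fixes a b c d :: int and h1 h2 :: "real \<Rightarrow> real"
  assumes h1_def: "\<And>x. h1 x = of_int a * x + of_int b"
      and h2_def: "\<And>x. h2 x = of_int c * x + of_int d"
      and "0 < a" and "a \<le> c"
      and "0 \<le> b" and "0 \<le> d"
      and "1 + real_of_int d / real_of_int c > real_of_int b / real_of_int a"
  shows "\<exists>L. (\<lambda>n. cfrac_K (\<lambda>i. - (h1 (real i) * h2 (real i)))
                         (\<lambda>i. h1 (real i) + h2 (real i + 1)) n) \<longlonglongrightarrow> L
     \<and> inverse (L / h2 1 + 1)
         = (1 / Beta (1 + real_of_int b / real_of_int a)
                     (1 + real_of_int d / real_of_int c - real_of_int b / real_of_int a))
           * integral {0..1} (\<lambda>t. t powr (real_of_int b / real_of_int a)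
                 * (1 - t) powr (real_of_int d / real_of_int c - real_of_int b / real_of_int a)
                 / (1 - real_of_int a / real_of_int c * t))
     \<and> (a = c \<and> d > b \<longrightarrow>
          inverse (L / h2 1 + 1)
            = Beta (1 + real_of_int b / real_of_int a) (real_of_int (d - b) / real_of_int a)
              / Beta (1 + real_of_int b / real_of_int a) (1 + real_of_int (d - b) / real_of_int a)
          \<and> Beta (1 + real_of_int b / real_of_int a) (real_of_int (d - b) / real_of_int a)
              / Beta (1 + real_of_int b / real_of_int a) (1 + real_of_int (d - b) / real_of_int a)
            = real_of_int (d + a) / real_of_int (d - b))"
  proof -
  have a0: "real_of_int a > 0" and c0: "real_of_int c > 0" using assms(3,4) by auto
  have ac: "real_of_int a \<le> real_of_int c" using assms(4) by simp
  have b0: "real_of_int b \<ge> 0" and d0: "real_of_int d \<ge> 0" using assms(5,6) by auto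
  define be where "be = real_of_int b / real_of_int a"
  define de where "de = real_of_int d / real_of_int c"
  define z where "z = real_of_int a / real_of_int c"
  define x where "x = 1 + be"
  define y where "y = 1 + de - be"
  have be0: "be \<ge> 0" unfolding be_def using a0 b0 by simp
  have de0: "de \<ge> 0" unfolding de_def using c0 d0 by simp
  have y0: "y > 0" unfolding y_def be_def de_def using assms(7) by simp
  have x0: "x > 0" unfolding x_def using be0 by simp
  have z0: "z > 0" unfolding z_def using a0 c0 by simp
  have z1: "z \<le> 1" unfolding z_def using a0 c0 ac by simp
  have h1p: "h1 (real i) > 0" if "i \<ge> 1" for i
  proof -
    have "real_of_int a * real i \<ge> real_of_int a" using that a0 by simp
    thus ?thesis using h1_def b0 a0 by (smt (verit))
  qed
  have h2p: "h2 (real i) > 0" if "i \<ge> 1" for i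
  proof -
    have "real_of_int c * real i \<ge> real_of_int c" using that c0 by simp
    thus ?thesis using h2_def d0 c0 by (smt (verit))
  qed
  define P where "P m = (\<Prod>j<m. h1 (real (1+j)) / h2 (real (1+j+1)))" for m
  define S where "S n = (\<Sum>m\<le>n. P m)" for n
  have Kn: "cfrac_K (\<lambda>i. - (h1 (real i) * h2 (real i))) (\<lambda>i. h1 (real i) + h2 (real i + 1)) n
        = - h2 1 * (1 - 1 / S n)" and S1: "S n \<ge> 1" for n
  proof -
    have e: "(\<lambda>i. h1 (real i) + h2 (real i + 1)) = (\<lambda>i. h1 (real i) + h2 (real (Suc i)))"
      by (simp add: add.commute)
    have "cfrac_from (\<lambda>i. -(h1 (real i) * h2 (real i))) (\<lambda>i. h1 (real i) + h2 (real (Suc i))) 1 n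
       = - h2 (real 1) * (1 - 1 / S n) \<and> S n \<ge> 1"
      using cf_tail[of "\<lambda>i. h1 (real i)" "\<lambda>i. h2 (real i)" 1 n] h1p h2p
      unfolding S_def P_def by simp
    thus "cfrac_K (\<lambda>i. - (h1 (real i) * h2 (real i))) (\<lambda>i. h1 (real i) + h2 (real i + 1)) n
        = - h2 1 * (1 - 1 / S n)" "S n \<ge> 1"
      unfolding cfrac_K_def e by simp_all
  qed
  have Bpos: "Beta u v > 0" if "u > 0" "v > 0" for u v :: real
    using that by (simp add: Beta_def Gamma_real_pos)
  have nz: "u \<notin> \<int>\<^sub>\<le>\<^sub>0" if "u > 0" for u :: real
    using that nonpos_Ints_nonpos by force
  have Pform: "P m = z ^ m * Beta (x + real m) y / Beta x y" for m
  proof (induction m)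
    case 0
    then show ?case using Bpos[OF x0 y0] by (simp add: P_def)
  next
    case (Suc m)
    have r: "h1 (real (1+m)) / h2 (real (1+m+1)) = z * (x + real m) / (x + real m + y)"
    proof -
      have n: "z * (x + real m) = (real_of_int a * (1 + real m) + real_of_int b) / real_of_int c"
        unfolding z_def x_def be_def using a0 c0 by (simp add: field_simps)
      have dd: "x + real m + y = (real_of_int c * (1 + real m + 1) + real_of_int d) / real_of_int c"
        unfolding x_def y_def de_def be_def using a0 c0 by (simp add: field_simps)
      show ?thesis unfolding n dd h1_def h2_def using c0 by simp
    qed
    have bb: "(x + real m + y) * Beta (x + real m + 1) y = (x + real m) * Beta (x + real m) y"
      using Beta_plus1_left[OF nz[of "x + real m"]] x0 by simp
    have pos: "x + real m + y > 0" using x0 y0 by simp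
    have "P (Suc m) = P m * (h1 (real (1+m)) / h2 (real (1+m+1)))"
      by (simp add: P_def)
    also have "\<dots> = z ^ m * Beta (x + real m) y / Beta x y * (z * (x + real m) / (x + real m + y))"
      using Suc r by simp
    also have "\<dots> = z ^ Suc m * ((x + real m) * Beta (x + real m) y / (x + real m + y)) / Beta x y"
      by (simp add: field_simps)
    also have "(x + real m) * Beta (x + real m) y / (x + real m + y) = Beta (x + real (Suc m)) y"
      using bb pos by (simp add: field_simps)
    finally show ?case .
  qed
  have P0: "P m > 0" for m using Pform Bpos x0 y0 z0 by simp
  have Sinc: "incseq S" 
    by (rule incseq_SucI) (simp add: S_def less_imp_le[OF P0])
  define g where "g m t = z ^ m * (t powr (be + real m) * (1 - t) powr (de - be))" for m t
  define F where "F n t = (\<Sum>m\<le>n. g m t)" for n t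
  define f where "f t = t powr be * (1 - t) powr (de - be) / (1 - z * t)" for t :: real
  define B where "B = Beta x y"
  have B0: "B > 0" unfolding B_def using Bpos x0 y0 by simp
  have hg: "(g m has_integral (B * P m)) {0..1}" for m
  proof -
    have "((\<lambda>t. t powr (x + real m - 1) * (1 - t) powr (y - 1)) has_integral Beta (x + real m) y) {0..1}"
      by (rule has_integral_Beta_real) (use x0 y0 in auto)
    moreover have "x + real m - 1 = be + real m" "y - 1 = de - be" unfolding x_def y_def by simp_all
    ultimately have "((\<lambda>t. t powr (be + real m) * (1 - t) powr (de - be)) has_integral Beta (x + real m) y) {0..1}"
      by simp
    hence "(g m has_integral (z ^ m * Beta (x + real m) y)) {0..1}"
      unfolding g_def by (rule has_integral_mult_right)
    moreover have "z ^ m * Beta (x + real m) y = B * P m" using B0 unfolding Pform B_def by simp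
    ultimately show ?thesis by simp
  qed
  have hF: "(F n has_integral (B * S n)) {0..1}" for n
  proof -
    have "((\<lambda>t. \<Sum>m\<le>n. g m t) has_integral (\<Sum>m\<le>n. B * P m)) {0..1}"
      by (rule has_integral_sum) (use hg in auto)
    thus ?thesis unfolding F_def S_def sum_distrib_left by simp
  qed
  have gnn: "g m t \<ge> 0" for m t unfolding g_def using z0 by simp
  have Fmono: "F n t \<le> F (Suc n) t" for n t unfolding F_def using gnn by simp
  have Flim: "(\<lambda>n. F n t) \<longlonglongrightarrow> f t" if t: "t \<in> {0..1}" for t
  proof -
    consider "t = 0" | "t = 1" | "0 < t" "t < 1" using t by fastforce
    then show ?thesis
    proof cases
      case 1 thus ?thesis by (simp add: F_def g_def f_def)
    next
      case 2 thus ?thesis by (simp add: F_def g_def f_def)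
    next
      case 3
      have "z * t \<le> 1 * t" using 3 z1 by (intro mult_right_mono) auto
      hence "z * t < 1" using 3 by linarith
      hence zt: "norm (z * t) < 1" using 3 z0 by simp
      have "(\<lambda>n. \<Sum>m\<le>n. (z * t) ^ m) \<longlonglongrightarrow> 1 / (1 - z * t)"
        using geometric_sums[OF zt] by (simp add: sums_def_le)
      hence "(\<lambda>n. t powr be * (1 - t) powr (de - be) * (\<Sum>m\<le>n. (z * t) ^ m))
               \<longlonglongrightarrow> t powr be * (1 - t) powr (de - be) * (1 / (1 - z * t))"
        by (rule tendsto_mult_left)
      moreover have "F n t = t powr be * (1 - t) powr (de - be) * (\<Sum>m\<le>n. (z * t) ^ m)" for n
      proof -
        have "t powr (be + real m) = t powr be * t ^ m" for m
          using 3 by (simp add: powr_add powr_realpow)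
        thus ?thesis unfolding F_def g_def sum_distrib_left
          by (intro sum.cong refl) (simp add: power_mult_distrib)
      qed
      ultimately show ?thesis unfolding f_def by simp
    qed
  qed
  have Fint: "F n integrable_on {0..1}" for n using hF by blast
  have iF: "integral {0..1} (F n) = B * S n" for n using hF by (rule integral_unique)
  have Fle: "F n t \<le> f t" if "t \<in> {0..1}" for n t
    using incseq_le[OF _ Flim[OF that]] Fmono by (simp add: incseq_SucI)
  have part3_int: "a = c \<and> d > b \<Longrightarrow> (f has_integral Beta x (de - be)) {0..1}"
  proof -
    assume H: "a = c \<and> d > b"
    have z1': "z = 1" unfolding z_def using H a0 by simp
    have w0: "de - be > 0" unfolding de_def be_def using H a0 by (simp add: divide_strict_right_mono)
    have "((\<lambda>t. t powr (x - 1) * (1 - t) powr ((de - be) - 1)) has_integral Beta x (de - be)) {0..1}"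
      by (rule has_integral_Beta_real) (use x0 w0 in auto)
    moreover have "t powr (x - 1) * (1 - t) powr ((de - be) - 1) = f t" if "t \<in> {0..1}" for t
    proof (cases "t = 1")
      case True thus ?thesis by (simp add: f_def)
    next
      case False
      hence "1 - t > 0" using that by simp
      thus ?thesis unfolding f_def z1' x_def by (simp add: powr_diff)
    qed
    ultimately show ?thesis using has_integral_cong by (metis (no_types, lifting))
  qed
  have h21: "h2 1 > 0" using h2p[of 1] by simp
  have fe: "(\<lambda>t. t powr (real_of_int b / real_of_int a)
                 * (1 - t) powr (real_of_int d / real_of_int c - real_of_int b / real_of_int a)
                 / (1 - real_of_int a / real_of_int c * t)) = f"
    by (simp add: f_def be_def de_def z_def fun_eq_iff)
  have Be: "Beta (1 + real_of_int b / real_of_int a)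
                     (1 + real_of_int d / real_of_int c - real_of_int b / real_of_int a) = B"
    by (simp add: B_def x_def y_def be_def de_def)
  have p3eq: "a = c \<and> d > b \<Longrightarrow> 
          Beta (1 + real_of_int b / real_of_int a) (real_of_int (d - b) / real_of_int a) = Beta x (de - be)
        \<and> Beta (1 + real_of_int b / real_of_int a) (1 + real_of_int (d - b) / real_of_int a) = B
        \<and> Beta x (de - be) / B = real_of_int (d + a) / real_of_int (d - b)"
  proof -
    assume H: "a = c \<and> d > b"
    have w: "real_of_int (d - b) / real_of_int a = de - be"
      using H unfolding de_def be_def by (simp add: diff_divide_distrib)
    have w0: "de - be > 0" unfolding de_def be_def using H a0 by (simp add: divide_strict_right_mono)
    have yy: "y = (de - be) + 1" unfolding y_def by simp
    have bb: "(x + (de - be)) * Beta x ((de - be) + 1) = (de - be) * Beta x (de - be)"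
      by (rule Beta_plus1_right[OF nz[OF w0]])
    have xw: "x + (de - be) > 0" using x0 w0 by simp
    have "Beta x (de - be) / B = (x + (de - be)) / (de - be)"
      unfolding B_def yy using bb w0 xw B0 unfolding B_def yy by (simp add: field_simps)
    also have "\<dots> = real_of_int (d + a) / real_of_int (d - b)"
      unfolding x_def de_def be_def using H a0 by (simp add: field_simps)
    finally have "Beta x (de - be) / B = real_of_int (d + a) / real_of_int (d - b)" .
    moreover have "1 + (de - be) = y" unfolding y_def by simp
    ultimately show ?thesis unfolding w B_def by (simp add: x_def be_def)
  qed
  show ?thesis
  proof (cases "bdd_above (range S)")
    case True
    define Si where "Si = Sup (range S)"
    have lim: "S \<longlonglongrightarrow> Si" unfolding Si_def by (rule LIMSEQ_incseq_SUP[OF True Sinc])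
    have Sle: "S n \<le> Si" for n by (rule incseq_le[OF Sinc lim])
    have Si1: "Si \<ge> 1" using Sle[of 0] S1[of 0] by simp
    have bnd: "bounded (range (\<lambda>k. integral {0..1} (F k)))"
      unfolding bounded_iff iF
    proof (intro exI ballI)
      fix u assume "u \<in> range (\<lambda>k. B * S k)"
      then obtain k where "u = B * S k" by auto
      thus "norm u \<le> B * Si" using B0 Sle[of k] S1[of k] by simp
    qed
    have MC: "f integrable_on {0..1} \<and> (\<lambda>k. integral {0..1} (F k)) \<longlonglongrightarrow> integral {0..1} f"
      by (rule monotone_convergence_increasing[OF Fint Fmono Flim bnd])
    have "(\<lambda>k. integral {0..1} (F k)) \<longlonglongrightarrow> B * Si"
      unfolding iF by (intro tendsto_mult_left lim)
    hence intf: "integral {0..1} f = B * Si" using MC LIMSEQ_unique by blast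
    define L where "L = - h2 1 * (1 - 1 / Si)"
    have KL: "(\<lambda>n. cfrac_K (\<lambda>i. - (h1 (real i) * h2 (real i)))
                         (\<lambda>i. h1 (real i) + h2 (real i + 1)) n) \<longlonglongrightarrow> L"
      unfolding Kn L_def using Si1 by (intro tendsto_intros lim) auto
    have inv: "inverse (L / h2 1 + 1) = Si" unfolding L_def using h21 Si1 by (simp add: field_simps)
    have main: "inverse (L / h2 1 + 1) = 1 / B * integral {0..1} f" using inv intf B0 by simp
    show ?thesis
    proof (intro exI conjI impI)
      show "(\<lambda>n. cfrac_K (\<lambda>i. - (h1 (real i) * h2 (real i)))
                         (\<lambda>i. h1 (real i) + h2 (real i + 1)) n) \<longlonglongrightarrow> L" by (rule KL)
      show "inverse (L / h2 1 + 1)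
         = (1 / Beta (1 + real_of_int b / real_of_int a)
                     (1 + real_of_int d / real_of_int c - real_of_int b / real_of_int a))
           * integral {0..1} (\<lambda>t. t powr (real_of_int b / real_of_int a)
                 * (1 - t) powr (real_of_int d / real_of_int c - real_of_int b / real_of_int a)
                 / (1 - real_of_int a / real_of_int c * t))" unfolding fe Be by (rule main)
    next
      assume H: "a = c \<and> b < d"
      have "integral {0..1} f = Beta x (de - be)" using part3_int[OF H] by (rule integral_unique)
      thus "inverse (L / h2 1 + 1)
            = Beta (1 + real_of_int b / real_of_int a) (real_of_int (d - b) / real_of_int a)
              / Beta (1 + real_of_int b / real_of_int a) (1 + real_of_int (d - b) / real_of_int a)"
        using p3eq[OF H] main by simp
    next
      assume H: "a = c \<and> b < d"
      show "Beta (1 + real_of_int b / real_of_int a) (real_of_int (d - b) / real_of_int a)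
              / Beta (1 + real_of_int b / real_of_int a) (1 + real_of_int (d - b) / real_of_int a)
            = real_of_int (d + a) / real_of_int (d - b)"
        using p3eq[OF H] by simp
    qed
  next
    case False
    have Stop: "filterlim S at_top sequentially"
      unfolding filterlim_at_top
    proof
      fix Z
      from False obtain n0 where "S n0 > Z" unfolding bdd_above_def
        by (auto simp: not_le)
      thus "eventually (\<lambda>n. Z \<le> S n) sequentially"
        using Sinc unfolding incseq_def
        by (intro eventually_sequentiallyI[of n0]) (meson less_le_trans less_imp_le)
    qed
    have inv0: "(\<lambda>n. inverse (S n)) \<longlonglongrightarrow> 0" by (rule tendsto_inverse_0_at_top[OF Stop])
    define L where "L = - h2 1"
    have KL: "(\<lambda>n. cfrac_K (\<lambda>i. - (h1 (real i) * h2 (real i)))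
                         (\<lambda>i. h1 (real i) + h2 (real i + 1)) n) \<longlonglongrightarrow> L"
    proof -
      have "(\<lambda>n. - h2 1 * (1 - inverse (S n))) \<longlonglongrightarrow> - h2 1 * (1 - 0)"
        by (intro tendsto_intros inv0)
      thus ?thesis unfolding Kn L_def by (simp add: divide_inverse)
    qed
    have nint: "\<not> f integrable_on {0..1}"
    proof
      assume fi: "f integrable_on {0..1}"
      have "B * S n \<le> integral {0..1} f" for n
        unfolding iF[symmetric] by (rule integral_le[OF Fint fi Fle])
      hence "S n \<le> integral {0..1} f / B" for n using B0 by (simp add: field_simps mult.commute)
      hence "bdd_above (range S)" by (intro bdd_aboveI) auto
      thus False using False by simp
    qed
    have intf: "integral {0..1} f = 0" by (rule not_integrable_integral[OF nint])
    show ?thesis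
    proof (intro exI conjI impI)
      show "(\<lambda>n. cfrac_K (\<lambda>i. - (h1 (real i) * h2 (real i)))
                         (\<lambda>i. h1 (real i) + h2 (real i + 1)) n) \<longlonglongrightarrow> L" by (rule KL)
      show "inverse (L / h2 1 + 1)
         = (1 / Beta (1 + real_of_int b / real_of_int a)
                     (1 + real_of_int d / real_of_int c - real_of_int b / real_of_int a))
           * integral {0..1} (\<lambda>t. t powr (real_of_int b / real_of_int a)
                 * (1 - t) powr (real_of_int d / real_of_int c - real_of_int b / real_of_int a)
                 / (1 - real_of_int a / real_of_int c * t))" unfolding fe Be intf L_def
        using h21 by simp
    next
      assume H: "a = c \<and> b < d"
      thus "inverse (L / h2 1 + 1)
            = Beta (1 + real_of_int b / real_of_int a) (real_of_int (d - b) / real_of_int a)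
              / Beta (1 + real_of_int b / real_of_int a) (1 + real_of_int (d - b) / real_of_int a)"
        using part3_int nint by blast
    next
      assume H: "a = c \<and> b < d"
      thus "Beta (1 + real_of_int b / real_of_int a) (real_of_int (d - b) / real_of_int a)
              / Beta (1 + real_of_int b / real_of_int a) (1 + real_of_int (d - b) / real_of_int a)
            = real_of_int (d + a) / real_of_int (d - b)"
        using p3eq[OF H] by simp
    qed
  qed

qed

end
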